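(* Under the setting below, assume $G$ is convex and the sampling in Algorithm BC is essentially cyclic: there exists $T\ge1$ such that every index $i\in[N]$ belongs to at least one of the sets $I^{k+1},\dots,I^{k+T}$ for every $k\ge0$. Then (surely): (i) $\sum_k\|\bm x^k-\bm z^k\|^2<\infty$; (ii) $\Phi(\bm z^k)\to\Phi_\star:=\lim_k\Phi^{\mathrm{FB}}_\Gamma(\bm x^k)$ (finite, $\ge\min\Phi$); (iii) $(\bm x^k)$ and $(\bm z^k)$ have the same cluster points, each such cluster point $\bm x^\star$ satisfies $0\in\hat\partial\Phi(\bm x^\star)$ and $\Phi(\bm x^\star)=\Phi^{\mathrm{FB}}_\Gamma(\bm x^\star)=\Phi_\star$.
   Context: Setting: $N\ge1$, $n=\sum_{i=1}^N n_i$, $\bm x=(x_1,\dots,x_N)$ with $x_i\in\mathbb R^{n_i}$; $\Phi=F+G$ with $F(\bm x)=\frac1N\sum_i f_i(x_i)$, each $f_i:\mathbb R^{n_i}\to\mathbb R$ differentiable with $L_{f_i}$-Lipschitz gradient, $G:\mathbb R^n\to\mathbb R\cup\{+\infty\}$ proper lsc, $\arg\min\Phi\ne\emptyset$. $\gamma_i\in(0,N/L_{f_i})$, $\Gamma=\operatorname{blockdiag}(\gamma_1I_{n_1},\dots,\gamma_NI_{n_N})$, $\|x\|_V^2=\langle x,Vx\rangle$, $\operatorname{prox}_G^{V}(u)=\arg\min_w\{G(w)+\frac12\|w-u\|_V^2\}$, $\mathbf T(\bm x)=\operatorname{prox}_G^{\Gamma^{-1}}(\bm x-\Gamma\nabla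 F(\bm x))$. Forward-backward envelope: $\Phi^{\mathrm{FB}}_\Gamma(\bm x):=\inf_{\bm w}\{F(\bm x)+\langle\nabla F(\bm x),\bm w-\bm x\rangle+G(\bm w)+\frac12\|\bm w-\bm x\|^2_{\Gamma^{-1}}\}$. Algorithm BC: given $\bm x^0\in\mathbb R^n$, for $k=0,1,\dots$: pick $\bm z^k\in\mathbf T(\bm x^k)$; select $I^{k+1}\subseteq[N]$; set $x_i^{k+1}=z_i^k$ for $i\in I^{k+1}$ and $x_i^{k+1}=x_i^k$ otherwise. $\hat\partial$ denotes the regular (Fréchet) subdifferential. *)

theory Defs
  imports "HOL-Analysis.Analysis" "HOL-Library.Extended_Real"
begin

text \<open>Block structure: the coordinates of \<open>real^'n\<close> are partitioned into N blocks
  by a block-assignment map \<open>blk :: 'n \<Rightarrow> nat\<close> (coordinate j belongs to block \<open>blk j\<close>).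
  Blocks are numbered 0..N-1.\<close>

definition blkproj :: "('n::finite \<Rightarrow> nat) \<Rightarrow> nat \<Rightarrow> real^'n \<Rightarrow> real^'n" where
  "blkproj blk i x = (\<chi> j. if blk j = i then x $ j else 0)"

text \<open>Smooth part F(x) = (1/N) sum_i f_i(x_i) and its gradient (g i is the gradient of f i).\<close>
definition Fsum :: "nat \<Rightarrow> (nat \<Rightarrow> real^'n::finite \<Rightarrow> real) \<Rightarrow> real^'n \<Rightarrow> real" where
  "Fsum N f x = (1 / real N) * (\<Sum>i<N. f i x)"

definition gradF :: "nat \<Rightarrow> (nat \<Rightarrow> real^'n::finite \<Rightarrow> real^'n) \<Rightarrow> real^'n \<Rightarrow> real^'n" where
  "gradF N g x = (1 / real N) *\<^sub>R (\<Sum>i<N. g i x)"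

text \<open>Gamma = blockdiag(gam_1 I, ..., gam_N I); scaled maps and norms.\<close>
definition Gam_mul :: "('n::finite \<Rightarrow> nat) \<Rightarrow> (nat \<Rightarrow> real) \<Rightarrow> real^'n \<Rightarrow> real^'n" where
  "Gam_mul blk gam v = (\<chi> j. gam (blk j) * v $ j)"

definition sqnorm_Gam_inv :: "('n::finite \<Rightarrow> nat) \<Rightarrow> (nat \<Rightarrow> real) \<Rightarrow> real^'n \<Rightarrow> real" where
  "sqnorm_Gam_inv blk gam w = (\<Sum>j\<in>UNIV. (w $ j)^2 / gam (blk j))"

definition prox_Gam :: "('n::finite \<Rightarrow> nat) \<Rightarrow> (nat \<Rightarrow> real) \<Rightarrow> (real^'n \<Rightarrow> ereal) \<Rightarrow> real^'n \<Rightarrow> (real^'n) set" where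
  "prox_Gam blk gam G u =
     {w. \<forall>v. G w + ereal (sqnorm_Gam_inv blk gam (w - u) / 2) \<le> G v + ereal (sqnorm_Gam_inv blk gam (v - u) / 2)}"

definition FB_op :: "nat \<Rightarrow> ('n::finite \<Rightarrow> nat) \<Rightarrow> (nat \<Rightarrow> real) \<Rightarrow> (nat \<Rightarrow> real^'n \<Rightarrow> real^'n)
                     \<Rightarrow> (real^'n \<Rightarrow> ereal) \<Rightarrow> real^'n \<Rightarrow> (real^'n) set" where
  "FB_op N blk gam g G x = prox_Gam blk gam G (x - Gam_mul blk gam (gradF N g x))"

definition FBE :: "nat \<Rightarrow> ('n::finite \<Rightarrow> nat) \<Rightarrow> (nat \<Rightarrow> real) \<Rightarrow> (nat \<Rightarrow> real^'n \<Rightarrow> real)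
                   \<Rightarrow> (nat \<Rightarrow> real^'n \<Rightarrow> real^'n) \<Rightarrow> (real^'n \<Rightarrow> ereal) \<Rightarrow> real^'n \<Rightarrow> ereal" where
  "FBE N blk gam f g G x =
     (INF w. ereal (Fsum N f x + gradF N g x \<bullet> (w - x)) + G w
             + ereal (sqnorm_Gam_inv blk gam (w - x) / 2))"

definition proper_fun :: "('a \<Rightarrow> ereal) \<Rightarrow> bool" where
  "proper_fun G \<longleftrightarrow> (\<forall>x. G x \<noteq> -\<infinity>) \<and> (\<exists>x. G x \<noteq> \<infinity>)"

definition lsc_fun :: "('a::topological_space \<Rightarrow> ereal) \<Rightarrow> bool" where
  "lsc_fun G \<longleftrightarrow> (\<forall>c. closed {x. G x \<le> c})"

definition convex_ext :: "('a::real_vector \<Rightarrow> ereal) \<Rightarrow> bool" where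
  "convex_ext G \<longleftrightarrow> (\<forall>x y t. 0 \<le> t \<and> t \<le> 1 \<longrightarrow>
      G ((1 - t) *\<^sub>R x + t *\<^sub>R y) \<le> ereal (1 - t) * G x + ereal t * G y)"

definition frechet_subdiff :: "('a::real_inner \<Rightarrow> ereal) \<Rightarrow> 'a \<Rightarrow> 'a set" where
  "frechet_subdiff \<Phi> x = {v. \<bar>\<Phi> x\<bar> \<noteq> \<infinity> \<and>
      (\<forall>e>0. \<exists>d>0. \<forall>y. norm (y - x) < d \<longrightarrow>
          \<Phi> y \<ge> \<Phi> x + ereal (v \<bullet> (y - x) - e * norm (y - x)))}"

definition cluster_points :: "(nat \<Rightarrow> 'a::topological_space) \<Rightarrow> 'a set" where
  "cluster_points s = {p. \<exists>r. strict_mono r \<and> (s \<circ> r) \<longlonglongrightarrow> p}"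

end

theory Submission
  imports Defs
begin


locale bc =
  fixes N :: nat and blk :: "'n::finite \<Rightarrow> nat"
    and f :: "nat \<Rightarrow> real^'n \<Rightarrow> real"
    and g :: "nat \<Rightarrow> real^'n \<Rightarrow> real^'n"
    and L gam :: "nat \<Rightarrow> real"
    and G :: "real^'n \<Rightarrow> ereal"
  assumes N_pos: "N \<ge> 1"
    and blk_range: "\<forall>j. blk j < N"
    and f_block: "\<forall>i<N. \<forall>w. f i w = f i (blkproj blk i w)"
    and f_grad: "\<forall>i<N. \<forall>w. (f i has_derivative (\<lambda>h. g i w \<bullet> h)) (at w)"
    and L_pos: "\<forall>i<N. L i > 0"
    and g_lip: "\<forall>i<N. \<forall>u v. norm (g i u - g i v) \<le> L i * norm (u - v)"
    and gam: "\<forall>i<N. 0 < gam i \<and> gam i < real N / L i"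
    and G_proper: "proper_fun G"
    and G_lsc: "lsc_fun G"
begin

abbreviation "P i \<equiv> blkproj blk i"
abbreviation "W \<equiv> sqnorm_Gam_inv blk gam"
abbreviation "F \<equiv> Fsum N f"
abbreviation "DF \<equiv> gradF N g"

definition Sc :: "real^'n \<Rightarrow> real^'n" where
  "Sc a = (\<chi> j. a $ j / sqrt (gam (blk j)))"

definition q :: "real^'n \<Rightarrow> real^'n \<Rightarrow> real" where
  "q x w = F x + DF x \<bullet> (w - x) + W (w - x) / 2"

definition Q :: "real^'n \<Rightarrow> real^'n \<Rightarrow> ereal" where
  "Q x w = G w + ereal (q x w)"

definition gmin where "gmin = Min (range (\<lambda>j. gam (blk j)))"
definition gmax where "gmax = Max (range (\<lambda>j. gam (blk j)))"

lemma gam_pos: "gam (blk j) > 0"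
  using gam blk_range by auto

lemma gmin_pos: "gmin > 0"
  unfolding gmin_def using gam_pos by (subst Min_gr_iff) auto

lemma gmin_le: "gmin \<le> gam (blk j)"
  unfolding gmin_def by (rule Min_le) auto

lemma gmax_ge: "gam (blk j) \<le> gmax"
  unfolding gmax_def by (rule Max_ge) auto

lemma gmax_pos: "gmax > 0"
  using gam_pos[of undefined] gmax_ge[of undefined] by linarith

lemma Sc_add: "Sc (a + b) = Sc a + Sc b" and Sc_diff: "Sc (a - b) = Sc a - Sc b"
  and Sc_scale: "Sc (c *\<^sub>R a) = c *\<^sub>R Sc a"
  unfolding Sc_def by (auto simp: vec_eq_iff add_divide_distrib diff_divide_distrib)

lemma norm2_vec: "(norm (a::real^'n))\<^sup>2 = (\<Sum>j\<in>UNIV. (a $ j)\<^sup>2)"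
  unfolding power2_norm_eq_inner inner_vec_def by (simp add: power2_eq_square)

lemma W_Sc: "W a = (norm (Sc a))\<^sup>2"
  unfolding norm2_vec sqnorm_Gam_inv_def Sc_def
  using gam_pos by (simp add: power_divide less_imp_le)

lemma W_nonneg: "W a \<ge> 0"
  by (simp add: W_Sc)

lemma W_upper: "W a \<le> (norm a)\<^sup>2 / gmin"
proof -
  have "W a = (\<Sum>j\<in>UNIV. (a $ j)\<^sup>2 / gam (blk j))" by (simp add: sqnorm_Gam_inv_def)
  also have "\<dots> \<le> (\<Sum>j\<in>UNIV. (a $ j)\<^sup>2 / gmin)"
    by (rule sum_mono) (simp add: frac_le gmin_pos gmin_le)
  also have "\<dots> = (norm a)\<^sup>2 / gmin" by (simp add: norm2_vec sum_divide_distrib)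
  finally show ?thesis .
qed

lemma W_lower: "(norm a)\<^sup>2 / gmax \<le> W a"
proof -
  have "(norm a)\<^sup>2 / gmax = (\<Sum>j\<in>UNIV. (a $ j)\<^sup>2 / gmax)" by (simp add: norm2_vec sum_divide_distrib)
  also have "\<dots> \<le> (\<Sum>j\<in>UNIV. (a $ j)\<^sup>2 / gam (blk j))"
    by (rule sum_mono) (simp add: frac_le gam_pos gmax_ge)
  also have "\<dots> = W a" by (simp add: sqnorm_Gam_inv_def)
  finally show ?thesis .
qed

lemma Sc_Gam_inner: "Sc a \<bullet> Sc (Gam_mul blk gam b) = a \<bullet> b"
proof -
  have e: "gam (blk j) * y / sqrt (gam (blk j)) * (x / sqrt (gam (blk j))) = x * y" for j x y
  proof -
    have s: "sqrt (gam (blk j)) > 0" using gam_pos[of j] by simp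
    have "sqrt (gam (blk j)) * sqrt (gam (blk j)) = gam (blk j)" using gam_pos[of j] by simp
    then show ?thesis using s by (simp add: field_simps)
  qed
  show ?thesis unfolding Sc_def Gam_mul_def inner_vec_def
    using gam_pos by (simp add: e mult.commute abs_of_pos less_imp_neq[symmetric])
qed

lemma W_Gam: "W (a + Gam_mul blk gam b) = W a + 2 * (a \<bullet> b) + W (Gam_mul blk gam b)"
  unfolding W_Sc Sc_add power2_norm_eq_inner
  by (simp add: inner_add_left inner_add_right Sc_Gam_inner inner_commute)

lemma W_add_scale: "W (a + t *\<^sub>R b) = W a + 2 * t * (Sc a \<bullet> Sc b) + t\<^sup>2 * W b"
  unfolding W_Sc Sc_add Sc_scale power2_norm_eq_inner
  by (simp add: inner_add_left inner_add_right inner_commute power2_eq_square algebra_simps)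

end

context bc begin

lemma P_diff: "P i (a - b) = P i a - P i b"
  by (simp add: blkproj_def vec_eq_iff)

lemma P_lin: "bounded_linear (P i)"
proof -
  have "linear (P i)" by (rule linearI) (auto simp: blkproj_def vec_eq_iff)
  then show ?thesis by (simp add: linear_conv_bounded_linear)
qed

lemma grad_block:
  assumes i: "i < N" shows "g i w \<bullet> h = g i (P i w) \<bullet> P i h"
proof -
  have fe: "f i = (\<lambda>w. f i (P i w))" using f_block i by blast
  have d1: "(f i has_derivative (\<lambda>h. g i w \<bullet> h)) (at w)" using f_grad i by auto
  have "((\<lambda>w. f i (P i w)) has_derivative (\<lambda>h. g i (P i w) \<bullet> P i h)) (at w)"
    using has_derivative_compose[OF bounded_linear_imp_has_derivative[OF P_lin] f_grad[rule_format, OF i, of "P i w"]]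
    by simp
  then have d2: "(f i has_derivative (\<lambda>h. g i (P i w) \<bullet> P i h)) (at w)" using fe by simp
  from has_derivative_unique[OF d1 d2] show ?thesis by (drule_tac x=h in fun_cong) simp
qed

lemma descent_aux:
  assumes i: "i < N"
  shows "f i y \<le> f i x + g i x \<bullet> (y - x) + L i / 2 * (norm (y - x))\<^sup>2"
    and "f i y \<ge> f i x + g i x \<bullet> (y - x) - L i / 2 * (norm (y - x))\<^sup>2"
proof -
  define d where "d = y - x"
  have deriv: "((\<lambda>t. f i (x + t *\<^sub>R d)) has_field_derivative (g i (x + t *\<^sub>R d) \<bullet> d)) (at t)" for t
  proof -
    have a: "((\<lambda>t. x + t *\<^sub>R d) has_derivative (\<lambda>s. s *\<^sub>R d)) (at t)"
      by (rule derivative_eq_intros refl)+ simp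
    have "((\<lambda>t. f i (x + t *\<^sub>R d)) has_derivative (\<lambda>s. g i (x + t *\<^sub>R d) \<bullet> (s *\<^sub>R d))) (at t)"
      using has_derivative_compose[OF a f_grad[rule_format, OF i]] by simp
    moreover have "(\<lambda>s. s * (g i (x + t *\<^sub>R d) \<bullet> d)) = (*) (g i (x + t *\<^sub>R d) \<bullet> d)"
      by (auto simp: mult.commute)
    ultimately show ?thesis unfolding has_field_derivative_def by simp
  qed
  have gb: "\<bar>(g i (x + t *\<^sub>R d) - g i x) \<bullet> d\<bar> \<le> L i * t * (norm d)\<^sup>2" if "0 \<le> t" for t
  proof -
    have "\<bar>(g i (x + t *\<^sub>R d) - g i x) \<bullet> d\<bar> \<le> norm (g i (x + t *\<^sub>R d) - g i x) * norm d"
      by (rule Cauchy_Schwarz_ineq2)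
    also have "\<dots> \<le> (L i * norm (t *\<^sub>R d)) * norm d"
      using g_lip i by (intro mult_right_mono) (metis add_diff_cancel_left' norm_ge_zero)+
    also have "\<dots> = L i * t * (norm d)\<^sup>2" using that by (simp add: power2_eq_square)
    finally show ?thesis .
  qed
  define K where "K = L i / 2 * (norm d)\<^sup>2"
  define c where "c = g i x \<bullet> d"
  have dd: "((\<lambda>t. f i (x + t *\<^sub>R d) - t * c - K * t ^ 2) has_field_derivative
       (g i (x + t *\<^sub>R d) \<bullet> d - 1 * c - K * (of_nat 2 * (1 * t ^ (2 - Suc 0))))) (at t)"
    and dd2: "((\<lambda>t. f i (x + t *\<^sub>R d) - t * c + K * t ^ 2) has_field_derivative
       (g i (x + t *\<^sub>R d) \<bullet> d - 1 * c + K * (of_nat 2 * (1 * t ^ (2 - Suc 0))))) (at t)" for t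
    by (rule DERIV_diff DERIV_add DERIV_cmult_right DERIV_cmult DERIV_power DERIV_ident deriv)+
  have "(\<lambda>t. f i (x + t *\<^sub>R d) - t * c - K * t ^ 2) 1 \<le> (\<lambda>t. f i (x + t *\<^sub>R d) - t * c - K * t ^ 2) 0"
  proof (rule DERIV_nonpos_imp_nonincreasing[of 0 1])
    fix t :: real assume t: "0 \<le> t" "t \<le> 1"
    have "g i (x + t *\<^sub>R d) \<bullet> d - 1 * c - K * (of_nat 2 * (1 * t ^ (2 - Suc 0))) \<le> 0"
      using gb[OF t(1)] by (simp add: inner_diff_left abs_le_iff K_def c_def algebra_simps)
    then show "\<exists>y. ((\<lambda>t. f i (x + t *\<^sub>R d) - t * c - K * t ^ 2) has_field_derivative y) (at t) \<and> y \<le> 0"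
      using dd by blast
  qed simp
  then show "f i y \<le> f i x + g i x \<bullet> (y - x) + L i / 2 * (norm (y - x))\<^sup>2"
    by (simp add: d_def K_def c_def)
  have "(\<lambda>t. f i (x + t *\<^sub>R d) - t * c + K * t ^ 2) 0 \<le> (\<lambda>t. f i (x + t *\<^sub>R d) - t * c + K * t ^ 2) 1"
  proof (rule DERIV_nonneg_imp_nondecreasing[of 0 1])
    fix t :: real assume t: "0 \<le> t" "t \<le> 1"
    have "g i (x + t *\<^sub>R d) \<bullet> d - 1 * c + K * (of_nat 2 * (1 * t ^ (2 - Suc 0))) \<ge> 0"
      using gb[OF t(1)] by (simp add: inner_diff_left abs_le_iff K_def c_def algebra_simps)
    then show "\<exists>y. ((\<lambda>t. f i (x + t *\<^sub>R d) - t * c + K * t ^ 2) has_field_derivative y) (at t) \<and> y \<ge> 0"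
      using dd2 by blast
  qed simp
  then show "f i y \<ge> f i x + g i x \<bullet> (y - x) - L i / 2 * (norm (y - x))\<^sup>2"
    by (simp add: d_def K_def c_def)
qed

lemma descent_block:
  assumes i: "i < N"
  shows "f i y \<le> f i x + g i x \<bullet> (y - x) + L i / 2 * (norm (P i (y - x)))\<^sup>2"
proof -
  have "f i y = f i (P i y)" "f i x = f i (P i x)" using f_block i by blast+
  moreover have "g i x \<bullet> (y - x) = g i (P i x) \<bullet> (P i y - P i x)"
    using grad_block[OF i] P_diff by metis
  ultimately show ?thesis using descent_aux(1)[OF i, of "P i y" "P i x"] by (simp add: P_diff)
qed

end

context bc begin

lemma blk_group: "(\<Sum>j\<in>UNIV. h j) = (\<Sum>i<N. \<Sum>j\<in>{j. blk j = i}. h j)"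
proof -
  have "blk ` UNIV \<subseteq> {..<N}" using blk_range by auto
  from sum.group[OF _ _ this, of h] show ?thesis by simp
qed

definition nb :: "nat \<Rightarrow> real^'n \<Rightarrow> real" where
  "nb i a = (\<Sum>j\<in>{j. blk j = i}. (a $ j)\<^sup>2)"

definition ci :: "nat \<Rightarrow> real" where "ci i = 1 / (2 * gam i) - L i / (2 * real N)"

definition cmin where "cmin = Min (ci ` {..<N})"

definition A :: "nat \<Rightarrow> real^'n \<Rightarrow> real^'n \<Rightarrow> real" where
  "A i y w = (1 / real N) * (f i y + g i y \<bullet> (w - y)) + nb i (w - y) / (2 * gam i)"

lemma nb_nonneg: "nb i a \<ge> 0" by (simp add: nb_def sum_nonneg)

lemma norm_P: "(norm (P i a))\<^sup>2 = nb i a"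
proof -
  have "(\<Sum>j\<in>UNIV. ((P i a) $ j)\<^sup>2) = (\<Sum>j\<in>UNIV. if blk j = i then (a $ j)\<^sup>2 else 0)"
    by (intro sum.cong) (auto simp: blkproj_def)
  also have "\<dots> = nb i a" by (simp add: sum.If_cases nb_def Int_def)
  finally show ?thesis unfolding norm2_vec .
qed

lemma norm_nb: "(norm a)\<^sup>2 = (\<Sum>i<N. nb i a)"
  unfolding norm2_vec nb_def by (rule blk_group)

lemma W_nb: "W a = (\<Sum>i<N. nb i a / gam i)"
proof -
  have "W a = (\<Sum>i<N. \<Sum>j\<in>{j. blk j = i}. (a $ j)\<^sup>2 / gam (blk j))"
    unfolding sqnorm_Gam_inv_def by (rule blk_group)
  also have "\<dots> = (\<Sum>i<N. \<Sum>j\<in>{j. blk j = i}. (a $ j)\<^sup>2 / gam i)"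
    by (intro sum.cong) auto
  also have "\<dots> = (\<Sum>i<N. nb i a / gam i)"
    by (simp add: nb_def sum_divide_distrib)
  finally show ?thesis .
qed

lemma ci_pos: "i < N \<Longrightarrow> ci i > 0"
proof -
  assume i: "i < N"
  have g: "0 < gam i" "gam i < real N / L i" and l: "L i > 0" using gam L_pos i by auto
  have N: "real N > 0" using N_pos by simp
  have "L i * gam i < real N" using g l by (simp add: field_simps)
  then have "L i / (2 * real N) < 1 / (2 * gam i)" using g N by (simp add: field_simps)
  then show ?thesis by (simp add: ci_def)
qed

lemma cmin_pos: "cmin > 0"
  unfolding cmin_def using ci_pos N_pos by (subst Min_gr_iff) (auto simp: lessThan_empty_iff)

lemma cmin_le: "i < N \<Longrightarrow> cmin \<le> ci i"
  unfolding cmin_def by (rule Min_le) auto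

lemma F_sum: "F w = (\<Sum>i<N. (1 / real N) * f i w)"
  by (simp add: Fsum_def sum_distrib_left)

lemma DF_inner: "DF y \<bullet> d = (\<Sum>i<N. (1 / real N) * (g i y \<bullet> d))"
  by (simp add: gradF_def inner_sum_left sum_distrib_left)

lemma q_sum: "q y w = (\<Sum>i<N. A i y w)"
proof -
  have "(\<Sum>i<N. A i y w) = (\<Sum>i<N. (1 / real N) * f i y + (1 / real N) * (g i y \<bullet> (w - y)) + (nb i (w - y) / gam i) / 2)"
    by (intro sum.cong) (auto simp: A_def field_simps)
  also have "\<dots> = q y w"
    unfolding q_def F_sum DF_inner W_nb sum.distrib sum_divide_distrib by simp
  finally show ?thesis by simp
qed

lemma A_lower:
  assumes i: "i < N"
  shows "(1 / real N) * f i w + ci i * nb i (w - x) \<le> A i x w"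
proof -
  have N: "real N > 0" using N_pos by simp
  have d: "f i w \<le> f i x + g i x \<bullet> (w - x) + L i / 2 * nb i (w - x)"
    using descent_block[OF i, of w x] norm_P by simp
  have "(1 / real N) * f i w \<le> (1 / real N) * (f i x + g i x \<bullet> (w - x) + L i / 2 * nb i (w - x))"
    using d N by (intro mult_left_mono) auto
  moreover have "(1 / real N) * (f i x + g i x \<bullet> (w - x) + L i / 2 * nb i (w - x))
     = (1 / real N) * (f i x + g i x \<bullet> (w - x)) + L i / (2 * real N) * nb i (w - x)"
    using N by (simp add: field_simps)
  moreover have "ci i * nb i (w - x) = nb i (w - x) / (2 * gam i) - L i / (2 * real N) * nb i (w - x)"
    by (simp add: ci_def field_simps)
  ultimately show ?thesis unfolding A_def by linarith
qed

lemma q_lower: "F w + cmin * (norm (w - x))\<^sup>2 \<le> q x w"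
proof -
  have "F w + cmin * (norm (w - x))\<^sup>2 = (\<Sum>i<N. (1 / real N) * f i w + cmin * nb i (w - x))"
    by (simp add: F_sum norm_nb sum.distrib sum_distrib_left)
  also have "\<dots> \<le> (\<Sum>i<N. A i x w)"
  proof (rule sum_mono)
    fix i assume "i \<in> {..<N}"
    then have i: "i < N" by simp
    have "cmin * nb i (w - x) \<le> ci i * nb i (w - x)"
      using cmin_le[OF i] nb_nonneg by (intro mult_right_mono) auto
    then show "(1 / real N) * f i w + cmin * nb i (w - x) \<le> A i x w"
      using A_lower[OF i, of w x] by linarith
  qed
  finally show ?thesis by (simp add: q_sum)
qed

lemma ereal_shift: "(X::ereal) + ereal a + ereal b = X + ereal (a + b)"
  by (cases X) auto

lemma FB_op_iff: "z \<in> FB_op N blk gam g G x \<longleftrightarrow> (\<forall>v. Q x z \<le> Q x v)"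
proof -
  define C where "C = W (Gam_mul blk gam (DF x)) / 2 - F x"
  have e: "G w + ereal (W (w - (x - Gam_mul blk gam (DF x))) / 2) = Q x w + ereal C" for w
  proof -
    have h: "w - (x - Gam_mul blk gam (DF x)) = (w - x) + Gam_mul blk gam (DF x)" by simp
    have "W (w - (x - Gam_mul blk gam (DF x))) = W (w - x) + 2 * ((w - x) \<bullet> DF x) + W (Gam_mul blk gam (DF x))"
      unfolding h by (rule W_Gam)
    then have "W (w - (x - Gam_mul blk gam (DF x))) / 2 = q x w + C"
      unfolding q_def C_def by (simp add: inner_commute field_simps)
    then show ?thesis unfolding Q_def by (simp only: ereal_shift)
  qed
  show ?thesis unfolding FB_op_def prox_Gam_def e
    by (simp add: ereal_add_le_add_iff2)
qed

lemma ereal_shift2: "ereal a + (X::ereal) + ereal b = X + ereal (a + b)"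
  by (cases X) auto

lemma ereal_shift3: "ereal a + ((X::ereal) + ereal b) = X + ereal (a + b)"
  by (cases X) auto

lemma FBE_INF: "FBE N blk gam f g G x = (INF w. Q x w)"
  unfolding FBE_def Q_def q_def by (simp add: ereal_shift3 add.assoc)

lemma FBE_le: "FBE N blk gam f g G x \<le> Q x w"
  unfolding FBE_INF by (rule INF_lower) simp

lemma FBE_eq: "(\<forall>v. Q x z \<le> Q x v) \<Longrightarrow> FBE N blk gam f g G x = Q x z"
  unfolding FBE_INF by (rule antisym) (auto intro: INF_lower INF_greatest)

lemma G_ninf: "G w \<noteq> -\<infinity>"
  using G_proper by (simp add: proper_fun_def)

lemma G_fin: assumes "\<forall>v. Q x z \<le> Q x v" shows "\<exists>r. G z = ereal r"
proof -
  obtain v where v: "G v \<noteq> \<infinity>" using G_proper by (auto simp: proper_fun_def)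
  then have "Q x v \<noteq> \<infinity>" using G_ninf[of v] unfolding Q_def by (cases "G v") auto
  then have "Q x z \<noteq> \<infinity>" using assms[rule_format, of v] by auto
  then have "G z \<noteq> \<infinity>" unfolding Q_def by auto
  then show ?thesis using G_ninf[of z] by (cases "G z") auto
qed

end

context bc begin

lemma decrease:
  assumes zmin: "\<forall>v. Q x z \<le> Q x v" and I: "I \<subseteq> {..<N}"
    and xp: "xp = (\<chi> j. if blk j \<in> I then z $ j else x $ j)"
  shows "FBE N blk gam f g G xp + ereal (cmin * (norm (xp - x))\<^sup>2) \<le> FBE N blk gam f g G x"
proof -
  obtain r where r: "G z = ereal r" using G_fin[OF zmin] by blast
  have blockwise: "A i xp z + (if i \<in> I then cmin * nb i (z - x) else 0) \<le> A i x z"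
    and nbx: "nb i (xp - x) = (if i \<in> I then nb i (z - x) else 0)" if i: "i < N" for i
  proof -
    show "nb i (xp - x) = (if i \<in> I then nb i (z - x) else 0)"
      unfolding nb_def xp by (auto intro!: sum.cong sum.neutral)
    show "A i xp z + (if i \<in> I then cmin * nb i (z - x) else 0) \<le> A i x z"
    proof (cases "i \<in> I")
      case True
      have "P i xp = P i z" using True by (auto simp: blkproj_def xp vec_eq_iff)
      then have f1: "f i xp = f i z" using f_block i by metis
      have "P i (z - xp) = 0" using True by (auto simp: blkproj_def xp vec_eq_iff)
      then have g1: "g i xp \<bullet> (z - xp) = 0" using grad_block[OF i, of xp "z - xp"] by simp
      have n1: "nb i (z - xp) = 0" unfolding nb_def xp using True by (auto intro!: sum.neutral)
      have "A i xp z = (1 / real N) * f i z" unfolding A_def f1 g1 n1 by simp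
      moreover have "cmin * nb i (z - x) \<le> ci i * nb i (z - x)"
        using cmin_le[OF i] nb_nonneg by (intro mult_right_mono) auto
      ultimately show ?thesis using A_lower[OF i, of z x] True by simp
    next
      case False
      have pe: "P i xp = P i x" using False by (auto simp: blkproj_def xp vec_eq_iff)
      then have f1: "f i xp = f i x" using f_block i by metis
      have "P i (z - xp) = P i (z - x)" using False by (auto simp: blkproj_def xp vec_eq_iff)
      then have g1: "g i xp \<bullet> (z - xp) = g i x \<bullet> (z - x)"
        using grad_block[OF i] pe by metis
      have n1: "nb i (z - xp) = nb i (z - x)" unfolding nb_def xp using False
        by (auto intro!: sum.cong)
      show ?thesis unfolding A_def f1 g1 n1 using False by simp
    qed
  qed
  have nx: "(norm (xp - x))\<^sup>2 = (\<Sum>i<N. if i \<in> I then nb i (z - x) else 0)"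
    unfolding norm_nb by (rule sum.cong) (auto simp: nbx)
  have "q xp z + cmin * (norm (xp - x))\<^sup>2 = (\<Sum>i<N. A i xp z + (if i \<in> I then cmin * nb i (z - x) else 0))"
    unfolding q_sum nx sum.distrib sum_distrib_left by (simp add: if_distrib cong: if_cong)
  also have "\<dots> \<le> (\<Sum>i<N. A i x z)" by (rule sum_mono) (simp add: blockwise)
  finally have qq: "q xp z + cmin * (norm (xp - x))\<^sup>2 \<le> q x z" by (simp add: q_sum)
  have "FBE N blk gam f g G xp + ereal (cmin * (norm (xp - x))\<^sup>2) \<le> Q xp z + ereal (cmin * (norm (xp - x))\<^sup>2)"
    using FBE_le by (rule add_right_mono)
  also have "\<dots> = ereal (r + (q xp z + cmin * (norm (xp - x))\<^sup>2))" by (simp add: Q_def r)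
  also have "\<dots> \<le> ereal (r + q x z)" using qq by simp
  also have "\<dots> = FBE N blk gam f g G x" using FBE_eq[OF zmin] by (simp add: Q_def r)
  finally show ?thesis .
qed

end


locale bcc = bc +
  assumes G_convex: "convex_ext G"
begin

lemma vi:
  assumes zp: "\<forall>v. G z + ereal (W (z - u) / 2) \<le> G v + ereal (W (v - u) / 2)"
    and gz: "G z = ereal a" and gv: "G v = ereal b"
  shows "a \<le> b + Sc (z - u) \<bullet> Sc (v - z)"
proof (rule ccontr)
  assume "\<not> ?thesis"
  then have dpos: "a - b - Sc (z - u) \<bullet> Sc (v - z) > 0" by simp
  define d where "d = a - b - Sc (z - u) \<bullet> Sc (v - z)"
  define t where "t = min 1 (d / (W (v - z) + 1))"
  have Wn: "W (v - z) \<ge> 0" by (rule W_nonneg)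
  have d0: "d > 0" using dpos d_def by simp
  have t0: "t > 0" unfolding t_def using d0 Wn by simp
  have t1: "t \<le> 1" unfolding t_def by simp
  have tW: "t * W (v - z) < d"
  proof -
    have "t * W (v - z) \<le> d / (W (v - z) + 1) * W (v - z)"
      unfolding t_def using Wn by (intro mult_right_mono) auto
    also have "\<dots> < d" using d0 Wn by (simp add: field_simps)
    finally show ?thesis .
  qed
  define w where "w = (1 - t) *\<^sub>R z + t *\<^sub>R v"
  have "G w \<le> ereal (1 - t) * G z + ereal t * G v"
    using G_convex t0 t1 unfolding convex_ext_def w_def by simp
  then have Gw: "G w \<le> ereal ((1 - t) * a + t * b)" by (simp add: gz gv)
  have wu: "w - u = (z - u) + t *\<^sub>R (v - z)" unfolding w_def by (simp add: algebra_simps)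
  have "ereal (a + W (z - u) / 2) \<le> G w + ereal (W (w - u) / 2)"
    using zp[rule_format, of w] gz by simp
  also have "\<dots> \<le> ereal ((1 - t) * a + t * b) + ereal (W (w - u) / 2)"
    using Gw by (rule add_right_mono)
  finally have "a + W (z - u) / 2 \<le> (1 - t) * a + t * b + W (w - u) / 2" by simp
  then have "a + W (z - u) / 2 \<le> (1 - t) * a + t * b + (W (z - u) + 2 * t * (Sc (z - u) \<bullet> Sc (v - z)) + t\<^sup>2 * W (v - z)) / 2"
    unfolding wu W_add_scale .
  moreover have "t * (b + Sc (z - u) \<bullet> Sc (v - z) + t * W (v - z) / 2) - t * a =
      ((1 - t) * a + t * b + (W (z - u) + 2 * t * (Sc (z - u) \<bullet> Sc (v - z)) + t\<^sup>2 * W (v - z)) / 2) - (a + W (z - u) / 2)"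
    by (simp add: algebra_simps power2_eq_square)
  ultimately have "t * a \<le> t * (b + Sc (z - u) \<bullet> Sc (v - z) + t * W (v - z) / 2)"
    by linarith
  then have "a \<le> b + Sc (z - u) \<bullet> Sc (v - z) + t * W (v - z) / 2"
    using t0 by simp
  then show False using tW d_def d0 by linarith
qed

lemma Gam_diff: "Gam_mul blk gam (a - b) = Gam_mul blk gam a - Gam_mul blk gam b"
  by (simp add: Gam_mul_def vec_eq_iff algebra_simps)

lemma Gam_norm: "norm (Gam_mul blk gam a) \<le> gmax * norm a"
proof -
  have "(norm (Gam_mul blk gam a))\<^sup>2 = (\<Sum>j\<in>UNIV. (gam (blk j))\<^sup>2 * (a $ j)\<^sup>2)"
    unfolding norm2_vec by (simp add: Gam_mul_def power_mult_distrib)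
  also have "\<dots> \<le> (\<Sum>j\<in>UNIV. gmax\<^sup>2 * (a $ j)\<^sup>2)"
    using gam_pos gmax_ge by (intro sum_mono mult_right_mono power_mono) (auto simp: less_imp_le)
  also have "\<dots> = (gmax * norm a)\<^sup>2" by (simp add: norm2_vec sum_distrib_left power_mult_distrib)
  finally show ?thesis using gmax_pos by (simp add: power2_le_iff_abs_le)
qed

definition LS where "LS = (\<Sum>i<N. L i)"

lemma DF_lip: "norm (DF a - DF b) \<le> LS / real N * norm (a - b)"
proof -
  have "DF a - DF b = (1 / real N) *\<^sub>R (\<Sum>i<N. g i a - g i b)"
    by (simp add: gradF_def sum_subtractf scaleR_diff_right)
  then have "norm (DF a - DF b) = (1 / real N) * norm (\<Sum>i<N. g i a - g i b)" by simp
  also have "\<dots> \<le> (1 / real N) * (\<Sum>i<N. L i * norm (a - b))"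
    using g_lip by (intro mult_left_mono order.trans[OF norm_sum sum_mono]) auto
  also have "\<dots> = LS / real N * norm (a - b)" by (simp add: LS_def sum_distrib_right)
  finally show ?thesis .
qed

lemma LS_nonneg: "LS \<ge> 0" unfolding LS_def using L_pos by (intro sum_nonneg) (auto simp: less_imp_le)

definition KT where "KT = sqrt (gmax / gmin) * (1 + gmax * LS / real N)"

lemma KT_nonneg: "KT \<ge> 0" unfolding KT_def using gmax_pos gmin_pos LS_nonneg by simp

lemma prox_nonexp:
  assumes z1: "\<forall>v. G z1 + ereal (W (z1 - u1) / 2) \<le> G v + ereal (W (v - u1) / 2)"
    and z2: "\<forall>v. G z2 + ereal (W (z2 - u2) / 2) \<le> G v + ereal (W (v - u2) / 2)"
    and g1: "G z1 = ereal a1" and g2: "G z2 = ereal a2"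
  shows "W (z1 - z2) \<le> W (u1 - u2)"
proof -
  have i1: "a1 \<le> a2 + Sc (z1 - u1) \<bullet> Sc (z2 - z1)" by (rule vi[OF z1 g1 g2])
  have i2: "a2 \<le> a1 + Sc (z2 - u2) \<bullet> Sc (z1 - z2)" by (rule vi[OF z2 g2 g1])
  define p where "p = Sc z1 - Sc z2"
  define r where "r = Sc u1 - Sc u2"
  have "0 \<le> Sc (z1 - u1) \<bullet> Sc (z2 - z1) + Sc (z2 - u2) \<bullet> Sc (z1 - z2)" using i1 i2 by simp
  also have "\<dots> = r \<bullet> p - p \<bullet> p" unfolding p_def r_def Sc_diff
    by (simp add: inner_diff_left inner_diff_right inner_commute algebra_simps)
  finally have "p \<bullet> p \<le> r \<bullet> p" by simp
  also have "\<dots> \<le> norm r * norm p" by (rule norm_cauchy_schwarz)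
  finally have "(norm p)\<^sup>2 \<le> norm r * norm p" by (simp add: power2_norm_eq_inner)
  then have "norm p \<le> norm r"
    by (cases "norm p = 0") (auto simp: power2_eq_square)
  then have "(norm p)\<^sup>2 \<le> (norm r)\<^sup>2" by (simp add: power_mono)
  then show ?thesis unfolding W_Sc p_def r_def Sc_diff .
qed

lemma T_lip:
  assumes z1: "z1 \<in> FB_op N blk gam g G x1" and z2: "z2 \<in> FB_op N blk gam g G x2"
  shows "norm (z1 - z2) \<le> KT * norm (x1 - x2)"
proof -
  define u1 where "u1 = x1 - Gam_mul blk gam (DF x1)"
  define u2 where "u2 = x2 - Gam_mul blk gam (DF x2)"
  have p1: "\<forall>v. G z1 + ereal (W (z1 - u1) / 2) \<le> G v + ereal (W (v - u1) / 2)"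
    using z1 unfolding FB_op_def prox_Gam_def u1_def by simp
  have p2: "\<forall>v. G z2 + ereal (W (z2 - u2) / 2) \<le> G v + ereal (W (v - u2) / 2)"
    using z2 unfolding FB_op_def prox_Gam_def u2_def by simp
  obtain a1 where a1: "G z1 = ereal a1" using G_fin z1 FB_op_iff by blast
  obtain a2 where a2: "G z2 = ereal a2" using G_fin z2 FB_op_iff by blast
  have W12: "W (z1 - z2) \<le> W (u1 - u2)" by (rule prox_nonexp[OF p1 p2 a1 a2])
  have "(norm (z1 - z2))\<^sup>2 \<le> gmax * W (z1 - z2)"
    using W_lower[of "z1 - z2"] gmax_pos by (simp add: field_simps)
  also have "\<dots> \<le> gmax * ((norm (u1 - u2))\<^sup>2 / gmin)"
    using W12 W_upper[of "u1 - u2"] gmax_pos by (intro mult_left_mono) auto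
  finally have nz: "(norm (z1 - z2))\<^sup>2 \<le> (gmax / gmin) * (norm (u1 - u2))\<^sup>2" by simp
  have "norm (u1 - u2) = norm ((x1 - x2) - Gam_mul blk gam (DF x1 - DF x2))"
    unfolding u1_def u2_def Gam_diff by (simp add: algebra_simps)
  also have "\<dots> \<le> norm (x1 - x2) + norm (Gam_mul blk gam (DF x1 - DF x2))" by (rule norm_triangle_ineq4)
  also have "\<dots> \<le> norm (x1 - x2) + gmax * (LS / real N * norm (x1 - x2))"
    using Gam_norm DF_lip gmax_pos by (smt (verit, best) mult_left_mono)
  finally have nu: "norm (u1 - u2) \<le> (1 + gmax * LS / real N) * norm (x1 - x2)"
    by (simp add: algebra_simps)
  have "norm (z1 - z2) = sqrt ((norm (z1 - z2))\<^sup>2)" by simp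
  also have "\<dots> \<le> sqrt ((gmax / gmin) * (norm (u1 - u2))\<^sup>2)" using nz by (rule real_sqrt_le_mono)
  also have "\<dots> = sqrt (gmax / gmin) * norm (u1 - u2)" by (simp only: real_sqrt_mult real_sqrt_abs abs_norm_cancel)
  also have "\<dots> \<le> sqrt (gmax / gmin) * ((1 + gmax * LS / real N) * norm (x1 - x2))"
    using nu gmax_pos gmin_pos by (intro mult_left_mono) auto
  also have "\<dots> = KT * norm (x1 - x2)" by (simp add: KT_def)
  finally show ?thesis .
qed

end

context bc begin

definition KF where "KF = (\<Sum>i<N. L i) / (2 * real N)"

lemma KF_nonneg: "KF \<ge> 0"
proof -
  have "real N > 0" using N_pos by simp
  then show ?thesis unfolding KF_def using L_pos by (intro divide_nonneg_pos sum_nonneg) (auto simp: less_imp_le)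
qed

lemma F_lower: "F w \<ge> F x + DF x \<bullet> (w - x) - KF * (norm (w - x))\<^sup>2"
proof -
  define n2 where "n2 = (norm (w - x))\<^sup>2"
  have k: "KF * n2 = (\<Sum>i<N. (1 / real N) * (L i / 2 * n2))"
    unfolding KF_def sum_divide_distrib sum_distrib_right by (intro sum.cong) (auto simp: field_simps)
  have "F x + DF x \<bullet> (w - x) - KF * n2 = (\<Sum>i<N. (1 / real N) * f i x) + (\<Sum>i<N. (1 / real N) * (g i x \<bullet> (w - x))) - (\<Sum>i<N. (1 / real N) * (L i / 2 * n2))"
    using k by (simp add: F_sum DF_inner)
  also have "\<dots> = (\<Sum>i<N. (1 / real N) * (f i x + g i x \<bullet> (w - x) - L i / 2 * n2))"
    unfolding sum.distrib[symmetric] sum_subtractf[symmetric] by (intro sum.cong) (auto simp: algebra_simps)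
  finally have "F x + DF x \<bullet> (w - x) - KF * (norm (w - x))\<^sup>2 =
      (\<Sum>i<N. (1 / real N) * (f i x + g i x \<bullet> (w - x) - L i / 2 * (norm (w - x))\<^sup>2))"
    by (simp add: n2_def)
  also have "\<dots> \<le> (\<Sum>i<N. (1 / real N) * f i w)"
    using descent_aux(2) by (intro sum_mono mult_left_mono) auto
  finally show ?thesis by (simp add: F_sum)
qed

lemma q_upper: "q x w \<le> F w + (KF + 1 / (2 * gmin)) * (norm (w - x))\<^sup>2"
proof -
  have a: "W (w - x) / 2 \<le> (norm (w - x))\<^sup>2 / gmin / 2" using W_upper by simp
  have b: "(norm (w - x))\<^sup>2 / gmin / 2 = 1 / (2 * gmin) * (norm (w - x))\<^sup>2" by simp
  show ?thesis using F_lower[where w=w and x=x] a b unfolding q_def distrib_right by linarith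
qed

lemma q_self: "q x x = F x"
  by (simp add: q_def sqnorm_Gam_inv_def)

lemma f_cont: "i < N \<Longrightarrow> isCont (f i) p"
  using f_grad has_derivative_continuous by blast

lemma g_cont: assumes i: "i < N" shows "isCont (g i) p"
proof -
  have "(L i)-lipschitz_on UNIV (g i)"
    using g_lip L_pos i by (intro lipschitz_onI) (auto simp: dist_norm less_imp_le)
  then have "continuous_on UNIV (g i)" by (rule lipschitz_on_continuous_on)
  then show ?thesis by (simp add: continuous_on_eq_continuous_at)
qed

lemma F_tendsto: "s \<longlonglongrightarrow> p \<Longrightarrow> (\<lambda>k. F (s k)) \<longlonglongrightarrow> F p"
  unfolding Fsum_def
  by (intro tendsto_intros isCont_tendsto_compose[OF f_cont]) auto

lemma DF_tendsto: "s \<longlonglongrightarrow> p \<Longrightarrow> (\<lambda>k. DF (s k)) \<longlonglongrightarrow> DF p"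
  unfolding gradF_def
  by (intro tendsto_intros isCont_tendsto_compose[OF g_cont]) auto

lemma W_tendsto: assumes "s \<longlonglongrightarrow> p" shows " (\<lambda>k. W (s k)) \<longlonglongrightarrow> W p"
proof -
  have nz: "gam (blk j) \<noteq> 0" for j using gam_pos[of j] by linarith
  show ?thesis unfolding sqnorm_Gam_inv_def using assms
    by (intro tendsto_intros) (auto simp: nz)
qed

lemma q_tendsto: "s \<longlonglongrightarrow> p \<Longrightarrow> t \<longlonglongrightarrow> r \<Longrightarrow> (\<lambda>k. q (s k) (t k)) \<longlonglongrightarrow> q p r"
  unfolding q_def
  by (intro tendsto_intros F_tendsto DF_tendsto W_tendsto) auto

lemma lsc_lim:
  assumes s: "s \<longlonglongrightarrow> p" and le: "\<forall>k. G (s k) \<le> ereal (h k)" and h: "h \<longlonglongrightarrow> c"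
  shows "G p \<le> ereal c"
proof (rule ereal_le_epsilon2)
  fix e :: real assume e: "0 < e"
  have "eventually (\<lambda>k. h k < c + e) sequentially"
    using h e by (intro order_tendstoD) auto
  then have ev: "eventually (\<lambda>k. s k \<in> {y. G y \<le> ereal (c + e)}) sequentially"
  proof (rule eventually_mono)
    fix k assume "h k < c + e"
    then show "s k \<in> {y. G y \<le> ereal (c + e)}" using le[rule_format, of k] by (auto intro: order.trans)
  qed
  have "closed {y. G y \<le> ereal (c + e)}" using G_lsc by (simp add: lsc_fun_def)
  from Lim_in_closed_set[OF this ev _ s] show "G p \<le> ereal c + ereal e" by simp
qed

end

lemma cluster_eq:
  fixes x z :: "nat \<Rightarrow> 'a::real_normed_vector"
  assumes "(\<lambda>k. x k - z k) \<longlonglongrightarrow> 0"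
  shows "cluster_points x = cluster_points z"
proof -
  have *: "p \<in> cluster_points b" if pa: "p \<in> cluster_points a" and d: "(\<lambda>k. a k - b k) \<longlonglongrightarrow> 0"
    for a b :: "nat \<Rightarrow> 'a" and p
  proof -
    obtain r where r: "strict_mono r" "(a \<circ> r) \<longlonglongrightarrow> p" using pa unfolding cluster_points_def by blast
    have "((\<lambda>k. a k - b k) \<circ> r) \<longlonglongrightarrow> 0" by (rule LIMSEQ_subseq_LIMSEQ[OF d r(1)])
    then have "(\<lambda>k. (a \<circ> r) k - ((\<lambda>k. a k - b k) \<circ> r) k) \<longlonglongrightarrow> p - 0"
      by (intro tendsto_diff r(2))
    then have "(b \<circ> r) \<longlonglongrightarrow> p" by (simp add: o_def)
    then show ?thesis using r(1) by (auto simp: cluster_points_def)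
  qed
  have d2: "(\<lambda>k. z k - x k) \<longlonglongrightarrow> 0"
    using tendsto_minus[OF assms] by simp
  show ?thesis using *[OF _ assms] *[OF _ d2] by blast
qed


context bcc begin

lemma main:
  fixes x z and I :: "nat \<Rightarrow> nat set" and T :: nat and \<Phi>
  assumes \<Phi>_def: "\<Phi> = (\<lambda>w. ereal (Fsum N f w) + G w)"
    and argmin_ne: "\<exists>w. \<forall>v. \<Phi> w \<le> \<Phi> v"
    and z_step: "\<forall>k. z k \<in> FB_op N blk gam g G (x k)"
    and I_sub: "\<forall>k. I (Suc k) \<subseteq> {..<N}"
    and x_upd: "\<forall>k j. x (Suc k) $ j = (if blk j \<in> I (Suc k) then z k $ j else x k $ j)"
    and T_pos: "T \<ge> 1"
    and ess_cyclic: "\<forall>k. \<forall>i<N. \<exists>t\<in>{1..T}. i \<in> I (k + t)"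
  shows "summable (\<lambda>k. (norm (x k - z k))^2)
     \<and> (\<exists>\<Phi>star::real.
          (\<lambda>k. FBE N blk gam f g G (x k)) \<longlonglongrightarrow> ereal \<Phi>star
        \<and> (\<lambda>k. \<Phi> (z k)) \<longlonglongrightarrow> ereal \<Phi>star
        \<and> (INF w. \<Phi> w) \<le> ereal \<Phi>star
        \<and> cluster_points x = cluster_points z
        \<and> (\<forall>p\<in>cluster_points x. 0 \<in> frechet_subdiff \<Phi> p
              \<and> \<Phi> p = ereal \<Phi>star
              \<and> FBE N blk gam f g G p = ereal \<Phi>star))"
proof -
  have zmin: "\<forall>v. Q (x k) (z k) \<le> Q (x k) v" for k using z_step FB_op_iff by blast
  define gz where "gz k = real_of_ereal (G (z k))" for k
  have Gz: "G (z k) = ereal (gz k)" for k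
  proof -
    obtain r where "G (z k) = ereal r" using G_fin[OF zmin[of k]] by blast
    then show ?thesis by (simp add: gz_def)
  qed
  define \<phi> where "\<phi> k = gz k + q (x k) (z k)" for k
  have FBk: "FBE N blk gam f g G (x k) = ereal (\<phi> k)" for k
    using FBE_eq[OF zmin[of k]] by (simp add: Q_def Gz \<phi>_def)
  have xs: "x (Suc k) = (\<chi> j. if blk j \<in> I (Suc k) then z k $ j else x k $ j)" for k
    using x_upd by (simp add: vec_eq_iff)
  have dec: "\<phi> (Suc k) + cmin * (norm (x (Suc k) - x k))\<^sup>2 \<le> \<phi> k" for k
    using decrease[OF zmin[of k] I_sub[rule_format, of k] xs[of k]] FBk by simp
  have \<Phi>z: "\<Phi> (z k) = ereal (gz k + F (z k))" for k by (simp add: \<Phi>_def Gz)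
  have FZ: "F (z k) \<le> q (x k) (z k)" for k
    using q_lower[of "z k" "x k"] cmin_pos by (smt (verit) zero_le_power2 mult_nonneg_nonneg)
  obtain w0 where w0: "\<forall>v. \<Phi> w0 \<le> \<Phi> v" using argmin_ne by blast
  have "\<Phi> w0 \<noteq> \<infinity>" using w0[rule_format, of "z 0"] \<Phi>z[of 0] by auto
  moreover have "\<Phi> w0 \<noteq> -\<infinity>" using G_ninf[of w0] by (simp add: \<Phi>_def)
  ultimately obtain m where m: "\<Phi> w0 = ereal m" by (cases "\<Phi> w0") auto
  have mle: "m \<le> \<phi> k" for k
  proof -
    have "m \<le> gz k + F (z k)" using w0[rule_format, of "z k"] m \<Phi>z[of k] by simp
    then show ?thesis using FZ[of k] by (simp add: \<phi>_def)
  qed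
  have decs: "decseq \<phi>"
  proof (rule decseq_SucI)
    fix k show "\<phi> (Suc k) \<le> \<phi> k" using dec[of k] cmin_pos
      by (smt (verit) zero_le_power2 mult_nonneg_nonneg)
  qed
  obtain \<Phi>s where \<phi>lim: "\<phi> \<longlonglongrightarrow> \<Phi>s" and \<Phi>sle: "\<forall>i. \<Phi>s \<le> \<phi> i"
    using decseq_convergent[OF decs, of m] mle by blast
  define d where "d k = (norm (x (Suc k) - x k))\<^sup>2" for k
  have sd: "summable d"
  proof (rule summable_comparison_test)
    show "summable (\<lambda>k. (\<phi> k - \<phi> (Suc k)) / cmin)"
      by (rule summable_divide[OF telescope_summable'[OF \<phi>lim]])
    show "\<exists>N. \<forall>n\<ge>N. norm (d n) \<le> (\<phi> n - \<phi> (Suc n)) / cmin"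
      using dec cmin_pos by (auto simp: d_def field_simps)
  qed
  define e where "e k = norm (x (Suc k) - x k)" for k
  have e_nn: "e k \<ge> 0" for k by (simp add: e_def)
  have xdiff: "norm (x (k + m) - x k) \<le> (\<Sum>s<m. e (k + s))" for k m
  proof (induction m)
    case (Suc m)
    have "norm (x (k + Suc m) - x k) \<le> norm (x (Suc (k + m)) - x (k + m)) + norm (x (k + m) - x k)"
      using norm_triangle_ineq[of "x (Suc (k + m)) - x (k + m)" "x (k + m) - x k"] by simp
    then show ?case using Suc by (simp add: e_def)
  qed simp
  define E where "E k = (\<Sum>s<T. e (k + s))" for k
  have comp: "\<bar>(x k - z k) $ j\<bar> \<le> (2 + KT) * E k" for k j
  proof -
    obtain t where t: "t \<in> {1..T}" "blk j \<in> I (k + t)" using ess_cyclic blk_range by blast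
    define m where "m = t - 1"
    have km: "k + t = Suc (k + m)" and mT: "m < T" using t by (auto simp: m_def)
    have xj: "x (Suc (k + m)) $ j = z (k + m) $ j" using x_upd t km by metis
    have split: "(x k - z k) $ j = (x k - x (k + m)) $ j + (x (k + m) - x (Suc (k + m))) $ j + (z (k + m) - z k) $ j"
      using xj by simp
    have a1: "\<bar>(x k - x (k + m)) $ j\<bar> \<le> norm (x (k + m) - x k)"
      by (metis component_le_norm_cart norm_minus_commute)
    have a2: "\<bar>(x (k + m) - x (Suc (k + m))) $ j\<bar> \<le> e (k + m)"
      unfolding e_def by (metis component_le_norm_cart norm_minus_commute real_norm_def)
    have a3: "\<bar>(z (k + m) - z k) $ j\<bar> \<le> KT * norm (x (k + m) - x k)"
      using component_le_norm_cart[of "z (k + m) - z k" j] T_lip[OF z_step[rule_format, of "k + m"] z_step[rule_format, of k]]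
      by simp
    have b1: "norm (x (k + m) - x k) \<le> E k"
      using xdiff[of k m] sum_mono2[of "{..<T}" "{..<m}" "\<lambda>s. e (k + s)"] mT e_nn
      unfolding E_def by fastforce
    have b2: "e (k + m) \<le> E k"
      unfolding E_def using mT e_nn by (intro member_le_sum) auto
    have "KT * norm (x (k + m) - x k) \<le> KT * E k" using b1 KT_nonneg by (rule mult_left_mono)
    then show ?thesis using split a1 a2 a3 b1 b2 by (simp add: algebra_simps)
  qed
  have Esq: "(E k)\<^sup>2 \<le> real T * (\<Sum>s<T. d (k + s))" for k
  proof -
    have "(E k)\<^sup>2 = (\<Sum>s<T. e (k + s) * 1)\<^sup>2" by (simp add: E_def)
    also have "\<dots> \<le> (\<Sum>s<T. (e (k + s))\<^sup>2) * (\<Sum>s<T. (1::real)\<^sup>2)" by (rule Cauchy_Schwarz_ineq_sum)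
    also have "\<dots> = real T * (\<Sum>s<T. d (k + s))" by (simp add: e_def d_def)
    finally show ?thesis .
  qed
  define C where "C = real CARD('a) * (2 + KT)\<^sup>2 * real T"
  have nz: "(norm (x k - z k))\<^sup>2 \<le> C * (\<Sum>s<T. d (k + s))" for k
  proof -
    have "(norm (x k - z k))\<^sup>2 = (\<Sum>j\<in>UNIV. ((x k - z k) $ j)\<^sup>2)" by (rule norm2_vec)
    also have "\<dots> \<le> (\<Sum>j\<in>(UNIV::'a set). ((2 + KT) * E k)\<^sup>2)"
    proof (rule sum_mono)
      fix j :: 'a
      have "\<bar>(x k - z k) $ j\<bar>\<^sup>2 \<le> ((2 + KT) * E k)\<^sup>2"
        using comp[of k j] by (intro power_mono) auto
      then show "((x k - z k) $ j)\<^sup>2 \<le> ((2 + KT) * E k)\<^sup>2" by simp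
    qed
    also have "\<dots> = real CARD('a) * (2 + KT)\<^sup>2 * (E k)\<^sup>2" by (simp add: power_mult_distrib)
    also have "\<dots> \<le> real CARD('a) * (2 + KT)\<^sup>2 * (real T * (\<Sum>s<T. d (k + s)))"
      using Esq[of k] by (intro mult_left_mono) auto
    finally show ?thesis by (simp add: C_def algebra_simps)
  qed
  have S1: "summable (\<lambda>k. (norm (x k - z k))\<^sup>2)"
  proof (rule summable_comparison_test)
    have "summable (\<lambda>k. \<Sum>s<T. d (k + s))"
      by (intro summable_sum summable_ignore_initial_segment sd)
    then show "summable (\<lambda>k. C * (\<Sum>s<T. d (k + s)))" by (rule summable_mult)
    show "\<exists>N. \<forall>n\<ge>N. norm ((norm (x n - z n))\<^sup>2) \<le> C * (\<Sum>s<T. d (n + s))"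
      using nz by auto
  qed
  have t2: "(\<lambda>k. (norm (x k - z k))\<^sup>2) \<longlonglongrightarrow> 0" by (rule summable_LIMSEQ_zero[OF S1])
  have "(\<lambda>k. sqrt ((norm (x k - z k))\<^sup>2)) \<longlonglongrightarrow> sqrt 0" by (rule tendsto_real_sqrt[OF t2])
  then have "(\<lambda>k. norm (x k - z k)) \<longlonglongrightarrow> 0" by simp
  then have xz0: "(\<lambda>k. x k - z k) \<longlonglongrightarrow> 0" by (simp add: tendsto_norm_zero_iff)
  define \<rho> where "\<rho> k = q (x k) (z k) - F (z k)" for k
  define C2 where "C2 = KF + 1 / (2 * gmin)"
  have \<rho>lim: "\<rho> \<longlonglongrightarrow> 0"
  proof (rule tendsto_sandwich[of "\<lambda>k. 0" _ _ "\<lambda>k. C2 * (norm (x k - z k))\<^sup>2"])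
    show "\<forall>\<^sub>F k in sequentially. 0 \<le> \<rho> k" using FZ by (simp add: \<rho>_def)
    show "\<forall>\<^sub>F k in sequentially. \<rho> k \<le> C2 * (norm (x k - z k))\<^sup>2"
    proof (intro always_eventually allI)
      fix k
      have "q (x k) (z k) \<le> F (z k) + C2 * (norm (z k - x k))\<^sup>2"
        unfolding C2_def by (rule q_upper)
      then show "\<rho> k \<le> C2 * (norm (x k - z k))\<^sup>2" by (simp add: \<rho>_def norm_minus_commute)
    qed
    show "(\<lambda>k. C2 * (norm (x k - z k))\<^sup>2) \<longlonglongrightarrow> 0" using tendsto_mult_right_zero[OF t2] by simp
  qed simp
  have gzF: "(\<lambda>k. gz k + F (z k)) \<longlonglongrightarrow> \<Phi>s"
  proof -
    have "(\<lambda>k. \<phi> k - \<rho> k) \<longlonglongrightarrow> \<Phi>s - 0" by (intro tendsto_diff \<phi>lim \<rho>lim)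
    then show ?thesis by (simp add: \<phi>_def \<rho>_def)
  qed
  have C1: "(\<lambda>k. FBE N blk gam f g G (x k)) \<longlonglongrightarrow> ereal \<Phi>s" using \<phi>lim by (simp add: FBk)
  have C2': "(\<lambda>k. \<Phi> (z k)) \<longlonglongrightarrow> ereal \<Phi>s" using gzF by (simp add: \<Phi>z)
  have C3: "(INF w. \<Phi> w) \<le> ereal \<Phi>s"
  proof -
    have "m \<le> \<Phi>s" using LIMSEQ_le_const[OF \<phi>lim] mle by blast
    then show ?thesis using INF_lower[of w0 UNIV \<Phi>] m by (simp add: order.trans)
  qed
  have C4: "cluster_points x = cluster_points z" by (rule cluster_eq[OF xz0])
  have C5: "0 \<in> frechet_subdiff \<Phi> p \<and> \<Phi> p = ereal \<Phi>s \<and> FBE N blk gam f g G p = ereal \<Phi>s"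
    if pc: "p \<in> cluster_points x" for p
  proof -
    obtain r where r: "strict_mono r" "(x \<circ> r) \<longlonglongrightarrow> p" using pc unfolding cluster_points_def by blast
    have "(\<lambda>k. (x \<circ> r) k - ((\<lambda>k. x k - z k) \<circ> r) k) \<longlonglongrightarrow> p - 0"
      by (intro tendsto_diff r(2) LIMSEQ_subseq_LIMSEQ[OF xz0 r(1)])
    then have zr: "(z \<circ> r) \<longlonglongrightarrow> p" by (simp add: o_def)
    have xr: "(\<lambda>k. x (r k)) \<longlonglongrightarrow> p" using r(2) by (simp add: o_def)
    have zr': "(\<lambda>k. z (r k)) \<longlonglongrightarrow> p" using zr by (simp add: o_def)
    have pmin: "\<forall>v. Q p p \<le> Q p v"
    proof
      fix v
      show "Q p p \<le> Q p v"
      proof (cases "G v")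
        case (real b)
        define h where "h k = b + q (x (r k)) v - q (x (r k)) (z (r k))" for k
        have le: "\<forall>k. G ((z \<circ> r) k) \<le> ereal (h k)"
        proof
          fix k
          have "Q (x (r k)) (z (r k)) \<le> Q (x (r k)) v" using zmin by blast
          then have "gz (r k) + q (x (r k)) (z (r k)) \<le> b + q (x (r k)) v"
            by (simp add: Q_def Gz real)
          then show "G ((z \<circ> r) k) \<le> ereal (h k)" by (simp add: Gz h_def)
        qed
        have "h \<longlonglongrightarrow> b + q p v - q p p"
          unfolding h_def by (intro tendsto_intros q_tendsto xr zr')
        from lsc_lim[OF zr le this] have "G p \<le> ereal (b + q p v - q p p)" .
        then have "G p + ereal (q p p) \<le> ereal (b + q p v - q p p) + ereal (q p p)"
          by (rule add_right_mono)
        then show ?thesis by (simp add: Q_def real)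
      next
        case PInf then show ?thesis by (simp add: Q_def)
      next
        case MInf then show ?thesis using G_ninf by simp
      qed
    qed
    have gzr: "(\<lambda>k. gz (r k)) \<longlonglongrightarrow> \<Phi>s - F p"
    proof -
      have "(\<lambda>k. (gz (r k) + F (z (r k))) - F (z (r k))) \<longlonglongrightarrow> \<Phi>s - F p"
        using LIMSEQ_subseq_LIMSEQ[OF gzF r(1)] F_tendsto[OF zr']
        by (intro tendsto_diff) (auto simp: o_def)
      then show ?thesis by simp
    qed
    have "G p \<le> ereal (\<Phi>s - F p)"
      by (rule lsc_lim[OF zr _ gzr]) (simp add: Gz)
    then obtain gp where gp: "G p = ereal gp" "gp \<le> \<Phi>s - F p"
      using G_ninf[of p] by (cases "G p") auto
    have "\<Phi>s \<le> gp + F p"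
    proof (rule LIMSEQ_le[of "\<lambda>k. \<phi> (r k)" _ "\<lambda>k. gp + q (x (r k)) p"])
      show "(\<lambda>k. \<phi> (r k)) \<longlonglongrightarrow> \<Phi>s" using LIMSEQ_subseq_LIMSEQ[OF \<phi>lim r(1)] by (simp add: o_def)
      have "(\<lambda>k. gp + q (x (r k)) p) \<longlonglongrightarrow> gp + q p p"
        by (intro tendsto_intros q_tendsto xr)
      then show "(\<lambda>k. gp + q (x (r k)) p) \<longlonglongrightarrow> gp + F p" by (simp add: q_self)
      show "\<exists>N. \<forall>n\<ge>N. \<phi> (r n) \<le> gp + q (x (r n)) p"
      proof (intro exI allI impI)
        fix n
        have "ereal (\<phi> (r n)) \<le> Q (x (r n)) p" using FBE_le FBk by metis
        then show "\<phi> (r n) \<le> gp + q (x (r n)) p" by (simp add: Q_def gp)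
      qed
    qed
    then have gpF: "gp + F p = \<Phi>s" using gp by simp
    have Pp: "\<Phi> p = ereal \<Phi>s" using gpF by (simp add: \<Phi>_def gp add.commute)
    have Fp: "FBE N blk gam f g G p = ereal \<Phi>s"
      using FBE_eq[OF pmin] gpF by (simp add: Q_def gp q_self)
    have C2pos: "C2 > 0" unfolding C2_def using KF_nonneg gmin_pos by (simp add: add_nonneg_pos)
    have fr: "0 \<in> frechet_subdiff \<Phi> p"
      unfolding frechet_subdiff_def
    proof (intro CollectI conjI allI impI)
      show "\<bar>\<Phi> p\<bar> \<noteq> \<infinity>" using Pp by simp
      fix \<epsilon> :: real assume \<epsilon>: "\<epsilon> > 0"
      show "\<exists>\<delta>>0. \<forall>y. norm (y - p) < \<delta> \<longrightarrow> \<Phi> p + ereal (0 \<bullet> (y - p) - \<epsilon> * norm (y - p)) \<le> \<Phi> y"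
      proof (intro exI conjI allI impI)
        show "\<epsilon> / C2 > 0" using \<epsilon> C2pos by simp
        fix y assume y: "norm (y - p) < \<epsilon> / C2"
        show "\<Phi> p + ereal (0 \<bullet> (y - p) - \<epsilon> * norm (y - p)) \<le> \<Phi> y"
        proof (cases "G y")
          case (real b)
          have "Q p p \<le> Q p y" using pmin by blast
          then have i1: "gp + F p \<le> b + q p y" by (simp add: Q_def gp real q_self)
          have i2: "q p y \<le> F y + C2 * (norm (y - p))\<^sup>2" unfolding C2_def by (rule q_upper)
          have "C2 * norm (y - p) \<le> \<epsilon>" using y C2pos by (simp add: field_simps)
          then have i3: "C2 * (norm (y - p))\<^sup>2 \<le> \<epsilon> * norm (y - p)"
            by (metis mult.assoc mult_right_mono norm_ge_zero power2_eq_square)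
          have "gp + F p - \<epsilon> * norm (y - p) \<le> F y + b" using i1 i2 i3 by linarith
          then show ?thesis by (simp add: \<Phi>_def gp real)
        next
          case PInf then show ?thesis by (simp add: \<Phi>_def)
        next
          case MInf then show ?thesis using G_ninf by simp
        qed
      qed
    qed
    show ?thesis using fr Pp Fp by blast
  qed
  show ?thesis using S1 C1 C2' C3 C4 C5 by blast
qed

end
theorem theorem2p8:
  fixes N :: nat
    and blk :: "'n::finite \<Rightarrow> nat"
    and f :: "nat \<Rightarrow> real^'n \<Rightarrow> real"
    and g :: "nat \<Rightarrow> real^'n \<Rightarrow> real^'n"
    and L gam :: "nat \<Rightarrow> real"
    and G :: "real^'n \<Rightarrow> ereal"
    and x z :: "nat \<Rightarrow> real^'n"
    and I :: "nat \<Rightarrow> nat set"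
    and T :: nat
  defines "\<Phi> \<equiv> (\<lambda>w. ereal (Fsum N f w) + G w)"
  assumes N_pos: "N \<ge> 1"
    and blk_range: "\<forall>j. blk j < N"
    and blk_nonempty: "\<forall>i<N. \<exists>j. blk j = i"
    and f_block: "\<forall>i<N. \<forall>w. f i w = f i (blkproj blk i w)"
    and f_grad: "\<forall>i<N. \<forall>w. (f i has_derivative (\<lambda>h. g i w \<bullet> h)) (at w)"
    and L_pos: "\<forall>i<N. L i > 0"
    and g_lip: "\<forall>i<N. \<forall>u v. norm (g i u - g i v) \<le> L i * norm (u - v)"
    and gam: "\<forall>i<N. 0 < gam i \<and> gam i < real N / L i"
    and G_proper: "proper_fun G"
    and G_lsc: "lsc_fun G"
    and G_convex: "convex_ext G"
    and argmin_ne: "\<exists>w. \<forall>v. \<Phi> w \<le> \<Phi> v"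
    and z_step: "\<forall>k. z k \<in> FB_op N blk gam g G (x k)"
    and I_sub: "\<forall>k. I (Suc k) \<subseteq> {..<N}"
    and x_upd: "\<forall>k j. x (Suc k) $ j = (if blk j \<in> I (Suc k) then z k $ j else x k $ j)"
    and T_pos: "T \<ge> 1"
    and ess_cyclic: "\<forall>k. \<forall>i<N. \<exists>t\<in>{1..T}. i \<in> I (k + t)"
  shows "summable (\<lambda>k. (norm (x k - z k))^2)
     \<and> (\<exists>\<Phi>star::real.
          (\<lambda>k. FBE N blk gam f g G (x k)) \<longlonglongrightarrow> ereal \<Phi>star
        \<and> (\<lambda>k. \<Phi> (z k)) \<longlonglongrightarrow> ereal \<Phi>star
        \<and> (INF w. \<Phi> w) \<le> ereal \<Phi>star
        \<and> cluster_points x = cluster_points z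
        \<and> (\<forall>p\<in>cluster_points x. 0 \<in> frechet_subdiff \<Phi> p
              \<and> \<Phi> p = ereal \<Phi>star
              \<and> FBE N blk gam f g G p = ereal \<Phi>star))"
  proof -
  interpret bcc N blk f g L gam G
    by unfold_locales (fact N_pos | fact blk_range | fact f_block | fact f_grad | fact L_pos | fact g_lip
      | fact gam | fact G_proper | fact G_lsc | fact G_convex)+
  have Pd: "\<Phi> = (\<lambda>w. ereal (Fsum N f w) + G w)" by (simp add: \<Phi>_def)
  show ?thesis
    by (rule main[OF Pd argmin_ne z_step I_sub x_upd T_pos ess_cyclic])
qed

end
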